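(* Let $\lambda=(\lambda_1\ge\lambda_2\ge\cdots\ge\lambda_n\ge0)$ be integers and $a_k=\lambda_k-\lambda_{k+1}$ ($1\le k\le n$, $\lambda_{n+1}=0$). The linear map $\phi$ sending an $n\times n$ integer matrix $(a_{ij})$ to the array $(\lambda_{ij})_{i+j\le n+1}$ with $\lambda_{ij}=\sum_{l=j}^{n+1-i}a_{il}$ restricts to a bijection from $\Upsilon_\lambda$ onto $\Pi_\lambda$. In particular, $\phi$ identifies $\mathrm{conv}(\Upsilon_\lambda)$ with the Gel'fand–Cetlin polytope $P_\lambda$.
   Context: For $I=\{i_1<\cdots<i_k\}\subseteq\{1,\ldots,n\}$, $\alpha_I\in\mathbb{Z}^{n\times n}$ is the exponent matrix of the antidiagonal monomial $\prod_{r=1}^kz_{r,i_{k+1-r}}$ of the minor of the generic matrix $(z_{ij})$ with rows $1,\ldots,k$ and columns $I$ (so $\alpha_I$ has entry $1$ at positions $(r,i_{k+1-r})$, $r=1,\ldots,k$, and $0$ elsewhere). $\Upsilon_\lambda$ is the set of all matrices $\sum_{s}\alpha_{I_s}$, where $(I_s)_s$ is a finite list of nonempty subsets of $\{1,\ldots,n\}$ containing exactly $a_k$ subsets of size $k$ for each $k$. A Gel'fand–Cetlin pattern for $\lambda$ is a real array $(\lambda_{i,j})_{i,j\ge1,\,i+j\le n+1}$ with $\lambda_{i,1}=\lambda_i$ for all $i$ and $\lambda_{i,j}\ge\lambda_{i,j+1}\ge\lambda_{i+1,j}$ whenever these entries are defined. $\Pi_\lambda$ is the set of integer Gel'fand–Cetlin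 patterns for $\lambda$, and the Gel'fand–Cetlin polytope is $P_\lambda=\mathrm{conv}(\Pi_\lambda)$. *)

theory Defs
  imports "HOL-Analysis.Analysis"
begin

text \<open>All arrays are functions nat => nat => 'a, 1-indexed; entries outside the
relevant index range are required to be 0, so that sets of arrays are faithful.\<close>

text \<open>alpha I: exponent matrix of the antidiagonal monomial of the minor with rows
1..k and columns I = {i_1 < ... < i_k}: entry 1 at (r, i_(k+1-r)), r = 1..k.\<close>
definition alpha :: "nat set \<Rightarrow> nat \<Rightarrow> nat \<Rightarrow> int" where
  "alpha I r c = (if 1 \<le> r \<and> r \<le> card I \<and> c = sorted_list_of_set I ! (card I - r)
                  then 1 else 0)"

definition amult :: "nat \<Rightarrow> (nat \<Rightarrow> int) \<Rightarrow> nat \<Rightarrow> int" where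
  "amult n lam k = lam k - (if k = n then 0 else lam (k + 1))"

definition Upsilon :: "nat \<Rightarrow> (nat \<Rightarrow> int) \<Rightarrow> (nat \<Rightarrow> nat \<Rightarrow> int) set" where
  "Upsilon n lam = {M. \<exists>Is :: nat set list.
      (\<forall>I\<in>set Is. I \<noteq> {} \<and> I \<subseteq> {1..n}) \<and>
      (\<forall>k\<in>{1..n}. int (length (filter (\<lambda>I. card I = k) Is)) = amult n lam k) \<and>
      M = (\<lambda>r c. sum_list (map (\<lambda>I. alpha I r c) Is))}"

definition GC_Pi :: "nat \<Rightarrow> (nat \<Rightarrow> int) \<Rightarrow> (nat \<Rightarrow> nat \<Rightarrow> int) set" where
  "GC_Pi n lam = {P. (\<forall>i j. \<not> (1 \<le> i \<and> 1 \<le> j \<and> i + j \<le> n + 1) \<longrightarrow> P i j = 0) \<and>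
      (\<forall>i\<in>{1..n}. P i 1 = lam i) \<and>
      (\<forall>i j. 1 \<le> i \<and> 1 \<le> j \<and> i + j + 1 \<le> n + 1 \<longrightarrow>
               P i j \<ge> P i (j + 1) \<and> P i (j + 1) \<ge> P (i + 1) j)}"

definition phi :: "nat \<Rightarrow> (nat \<Rightarrow> nat \<Rightarrow> 'a::comm_monoid_add) \<Rightarrow> nat \<Rightarrow> nat \<Rightarrow> 'a" where
  "phi n M = (\<lambda>i j. if 1 \<le> i \<and> 1 \<le> j \<and> i + j \<le> n + 1
                     then (\<Sum>l = j..n + 1 - i. M i l) else 0)"

definition realarr :: "(nat \<Rightarrow> nat \<Rightarrow> int) \<Rightarrow> nat \<Rightarrow> nat \<Rightarrow> real" where
  "realarr M = (\<lambda>i j. real_of_int (M i j))"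

definition conv_arr :: "(nat \<Rightarrow> nat \<Rightarrow> real) set \<Rightarrow> (nat \<Rightarrow> nat \<Rightarrow> real) set" where
  "conv_arr S = {x. \<exists>ps :: (real \<times> (nat \<Rightarrow> nat \<Rightarrow> real)) list.
      ps \<noteq> [] \<and> (\<forall>(c, p)\<in>set ps. 0 \<le> c \<and> p \<in> S) \<and>
      sum_list (map fst ps) = 1 \<and>
      x = (\<lambda>i j. sum_list (map (\<lambda>(c, p). c * p i j) ps))}"

end

theory Submission
  imports Defs
begin

definition GCh :: "nat \<Rightarrow> (nat \<Rightarrow> nat \<Rightarrow> int) \<Rightarrow> bool" where
  "GCh n P \<longleftrightarrow> (\<forall>i j. \<not> (1 \<le> i \<and> 1 \<le> j \<and> i + j \<le> n + 1) \<longrightarrow> P i j = 0) \<and>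
      (\<forall>i j. 1 \<le> i \<and> 1 \<le> j \<and> i + j + 1 \<le> n + 1 \<longrightarrow>
               P i j \<ge> P i (j + 1) \<and> P i (j + 1) \<ge> P (i + 1) j)"

lemma GC_Pi_iff: "P \<in> GC_Pi n lam \<longleftrightarrow> GCh n P \<and> (\<forall>i\<in>{1..n}. P i 1 = lam i)"
  by (auto simp: GC_Pi_def GCh_def)

definition chain :: "nat \<Rightarrow> nat \<Rightarrow> (nat \<Rightarrow> nat) \<Rightarrow> bool" where
  "chain n k col \<longleftrightarrow> (\<forall>r. 1 \<le> r \<and> r \<le> k \<longrightarrow> 1 \<le> col r \<and> col r + r \<le> n + 1) \<and>
     (\<forall>r. 1 \<le> r \<and> r < k \<longrightarrow> col (r + 1) < col r)"

definition chainmat :: "nat \<Rightarrow> (nat \<Rightarrow> nat) \<Rightarrow> nat \<Rightarrow> nat \<Rightarrow> int" where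
  "chainmat k col = (\<lambda>r c. if 1 \<le> r \<and> r \<le> k \<and> c = col r then 1 else 0)"

definition Msum :: "nat set list \<Rightarrow> nat \<Rightarrow> nat \<Rightarrow> int" where
  "Msum Is = (\<lambda>r c. sum_list (map (\<lambda>I. alpha I r c) Is))"

lemma Upsilon_iff: "M \<in> Upsilon n lam \<longleftrightarrow> (\<exists>Is. (\<forall>I\<in>set Is. I \<noteq> {} \<and> I \<subseteq> {1..n}) \<and>
      (\<forall>k\<in>{1..n}. int (length (filter (\<lambda>I. card I = k) Is)) = amult n lam k) \<and> M = Msum Is)"
  by (simp add: Upsilon_def Msum_def)

lemma sorted_plus:
  fixes s :: "nat list"
  assumes "sorted_wrt (<) s"
  shows "m + d < length s \<Longrightarrow> s ! m + d \<le> s ! (m + d)"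
proof (induction d)
  case 0 then show ?case by simp
next
  case (Suc d)
  then have "s ! (m + d) < s ! (m + Suc d)"
    using sorted_wrt_nth_less[OF assms, of "m + d" "m + Suc d"] by simp
  with Suc show ?case by simp
qed

lemma alpha_chain:
  assumes ne: "I \<noteq> {}" and sub: "I \<subseteq> {1..n}"
  shows "chain n (card I) (\<lambda>r. sorted_list_of_set I ! (card I - r)) \<and>
         alpha I = chainmat (card I) (\<lambda>r. sorted_list_of_set I ! (card I - r))"
proof -
  define s where "s = sorted_list_of_set I"
  define k where "k = card I"
  have fin: "finite I" using sub finite_subset by blast
  have len: "length s = k" using fin by (simp add: s_def k_def)
  have srt: "sorted_wrt (<) s" by (simp add: s_def)
  have sets: "set s = I" using fin by (simp add: s_def)
  have mem: "m < k \<Longrightarrow> s ! m \<in> {1..n}" for m using sets sub len nth_mem by blast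
  have c1: "1 \<le> s ! (k - r) \<and> s ! (k - r) + r \<le> n + 1" if "1 \<le> r" "r \<le> k" for r
  proof -
    have "s ! (k - r) + (r - 1) \<le> s ! (k - r + (r - 1))"
      using sorted_plus[OF srt, of "k - r" "r - 1"] that len by simp
    moreover have "k - r + (r - 1) = k - 1" using that by simp
    moreover have "s ! (k - 1) \<le> n" using mem[of "k - 1"] that by simp
    ultimately show ?thesis using mem[of "k - r"] that by auto
  qed
  have c2: "s ! (k - (r + 1)) < s ! (k - r)" if "1 \<le> r" "r < k" for r
    using sorted_wrt_nth_less[OF srt, of "k - (r + 1)" "k - r"] that len by simp
  show ?thesis
    unfolding chain_def chainmat_def alpha_def
    using c1 c2 by (auto simp: s_def[symmetric] k_def[symmetric] fun_eq_iff)
qed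

lemma chain_anti:
  assumes ch: "chain n k col" and r1: "1 \<le> r"
  shows "Suc r \<le> r' \<Longrightarrow> r' \<le> k \<Longrightarrow> col r' < col r"
proof (induction r' rule: dec_induct)
  case base then show ?case using ch r1 unfolding chain_def by auto
next
  case (step m)
  then have "col (m + 1) < col m" using ch r1 unfolding chain_def by auto
  with step show ?case by simp
qed


lemma chain_alpha:
  assumes ch: "chain n k col" and k1: "1 \<le> k"
  shows "col ` {1..k} \<noteq> {} \<and> col ` {1..k} \<subseteq> {1..n} \<and> card (col ` {1..k}) = k \<and>
         alpha (col ` {1..k}) = chainmat k col"
proof -
  define I where "I = col ` {1..k}"
  define s where "s = map (\<lambda>m. col (k - m)) [0..<k]"
  have srt: "sorted_wrt (<) s"
    unfolding sorted_wrt_iff_nth_less s_def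
    using chain_anti[OF ch] by auto
  have sets: "set s = I"
  proof
    show "set s \<subseteq> I" unfolding s_def I_def by auto
    show "I \<subseteq> set s" unfolding s_def I_def
    proof
      fix x assume "x \<in> col ` {1..k}"
      then obtain r where r: "r \<in> {1..k}" "x = col r" by auto
      then have "x = col (k - (k - r))" "k - r \<in> {0..<k}" by auto
      then show "x \<in> set (map (\<lambda>m. col (k - m)) [0..<k])" by force
    qed
  qed
  have dist: "distinct s" using srt strict_sorted_iff by blast
  have cardI: "card I = k" using distinct_card[OF dist] sets by (simp add: s_def)
  have sl: "sorted_list_of_set I = s"
  proof -
    have "finite I" unfolding I_def by simp
    moreover have "length s = k" by (simp add: s_def)
    ultimately show ?thesis using sorted_list_of_set_unique[of I s] srt sets cardI by simp
  qed
  have sub: "I \<subseteq> {1..n}"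
    unfolding I_def using ch unfolding chain_def by fastforce
  have ne: "I \<noteq> {}" unfolding I_def using k1 by auto
  have "alpha I = chainmat k col"
    unfolding alpha_def chainmat_def cardI sl
    by (auto simp: fun_eq_iff s_def)
  then show ?thesis using sub ne cardI by (simp add: I_def)
qed

lemma phi_chain:
  assumes ch: "chain n k col"
  shows "phi n (chainmat k col) i j = (if 1 \<le> i \<and> i \<le> k \<and> 1 \<le> j \<and> j \<le> col i then 1 else 0)"
proof (cases "1 \<le> i \<and> i \<le> k")
  case True
  then have cb: "1 \<le> col i" "col i + i \<le> n + 1" using ch unfolding chain_def by auto
  show ?thesis
  proof (cases "1 \<le> j \<and> i + j \<le> n + 1")
    case True2: True
    have "phi n (chainmat k col) i j = (\<Sum>l = j..n + 1 - i. if l = col i then 1 else 0)"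
      unfolding phi_def chainmat_def using True True2 by (auto intro!: sum.cong)
    also have "\<dots> = (if col i \<in> {j..n+1-i} then 1 else 0)"
      by (simp add: sum.delta')
    finally show ?thesis using True True2 cb by auto
  next
    case False
    then show ?thesis unfolding phi_def using True cb by auto
  qed
next
  case False
  then show ?thesis unfolding phi_def chainmat_def by auto
qed

lemma phi_sum_list:
  "phi n (\<lambda>i j. sum_list (map (\<lambda>x. f x i j) xs)) = (\<lambda>i j. sum_list (map (\<lambda>x. phi n (f x) i j) xs))"
proof (induction xs)
  case Nil then show ?case by (simp add: phi_def fun_eq_iff)
next
  case (Cons a xs)
  show ?case
  proof (intro ext)
    fix i j
    have "phi n (\<lambda>i j. sum_list (map (\<lambda>x. f x i j) (a # xs))) i j =
          phi n (f a) i j + phi n (\<lambda>i j. sum_list (map (\<lambda>x. f x i j) xs)) i j"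
      unfolding phi_def by (simp add: sum.distrib)
    then show "phi n (\<lambda>i j. sum_list (map (\<lambda>x. f x i j) (a # xs))) i j =
          sum_list (map (\<lambda>x. phi n (f x) i j) (a # xs))" using Cons by simp
  qed
qed

lemma phi_scale: "phi n (\<lambda>i j. (c::real) * p i j) = (\<lambda>i j. c * phi n p i j)"
  unfolding phi_def by (auto simp: fun_eq_iff sum_distrib_left)

lemma phi_realarr: "phi n (realarr M) = realarr (phi n M)"
  unfolding phi_def realarr_def by (auto simp: fun_eq_iff)

lemma GCh_chain: "chain n k col \<Longrightarrow> GCh n (phi n (chainmat k col))"
  unfolding GCh_def
proof (intro conjI allI impI)
  fix i j
  assume ch: "chain n k col"
  show "\<not> (1 \<le> i \<and> 1 \<le> j \<and> i + j \<le> n + 1) \<Longrightarrow> phi n (chainmat k col) i j = 0"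
    unfolding phi_def by auto
  assume r: "1 \<le> i \<and> 1 \<le> j \<and> i + j + 1 \<le> n + 1"
  show "phi n (chainmat k col) i (j + 1) \<le> phi n (chainmat k col) i j"
    unfolding phi_chain[OF ch] using r by auto
  have "i + 1 \<le> k \<Longrightarrow> col (i+1) < col i" using ch r unfolding chain_def by auto
  then show "phi n (chainmat k col) (i + 1) j \<le> phi n (chainmat k col) i (j + 1)"
    unfolding phi_chain[OF ch] using r by auto
qed

lemma GCh_sum_list:
  "(\<forall>x\<in>set xs. GCh n (f x)) \<Longrightarrow> GCh n (\<lambda>i j. sum_list (map (\<lambda>x. f x i j) xs))"
proof (induction xs)
  case Nil then show ?case by (simp add: GCh_def)
next
  case (Cons a xs)
  then have a: "GCh n (f a)" and b: "GCh n (\<lambda>i j. sum_list (map (\<lambda>x. f x i j) xs))" by auto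
  show ?case using a b unfolding GCh_def by (simp add: add_mono)
qed

lemma telescope:
  assumes "1 \<le> i" "i \<le> n"
  shows "(\<Sum>k=i..n. amult n lam k) = lam i"
  using assms(2)
proof (induction i rule: inc_induct)
  case base then show ?case by (simp add: amult_def)
next
  case (step m)
  have "(\<Sum>k=m..n. amult n lam k) = amult n lam m + (\<Sum>k=Suc m..n. amult n lam k)"
    using step(1,2) by (simp add: sum.atLeast_Suc_atMost)
  then show ?case using step by (simp add: amult_def)
qed

lemma count_ge:
  assumes "\<forall>I\<in>set Is. 1 \<le> card I \<and> card I \<le> n"
  shows "int (length (filter (\<lambda>I. i \<le> card I) Is)) = (\<Sum>k=i..n. int (length (filter (\<lambda>I. card I = k) Is)))"
  using assms
proof (induction Is)
  case Nil then show ?case by simp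
next
  case (Cons a Is)
  have "(\<Sum>k=i..n. int (length (filter (\<lambda>I. card I = k) (a # Is)))) =
        (\<Sum>k=i..n. (if card a = k then 1 else 0) + int (length (filter (\<lambda>I. card I = k) Is)))"
    by (rule sum.cong) auto
  also have "\<dots> = (\<Sum>k=i..n. (if card a = k then 1 else 0)) + (\<Sum>k=i..n. int (length (filter (\<lambda>I. card I = k) Is)))"
    by (simp add: sum.distrib)
  also have "(\<Sum>k=i..n. (if card a = k then 1 else 0)) = (if card a \<in> {i..n} then 1 else (0::int))"
    by (simp add: sum.delta)
  finally show ?case using Cons by auto
qed

lemma into:
  assumes v: "\<forall>I\<in>set Is. I \<noteq> {} \<and> I \<subseteq> {1..n}"
    and c: "\<forall>k\<in>{1..n}. int (length (filter (\<lambda>I. card I = k) Is)) = amult n lam k"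
  shows "phi n (Msum Is) \<in> GC_Pi n lam"
proof -
  have ph: "phi n (Msum Is) = (\<lambda>i j. sum_list (map (\<lambda>I. phi n (alpha I) i j) Is))"
    unfolding Msum_def by (rule phi_sum_list)
  have g: "GCh n (phi n (Msum Is))"
    unfolding ph by (rule GCh_sum_list) (use v alpha_chain GCh_chain in metis)
  have cards: "\<forall>I\<in>set Is. 1 \<le> card I \<and> card I \<le> n"
  proof
    fix I assume "I \<in> set Is"
    then have "I \<noteq> {}" "I \<subseteq> {1..n}" using v by auto
    moreover then have "finite I" using finite_subset by blast
    ultimately show "1 \<le> card I \<and> card I \<le> n"
      by (metis One_nat_def Suc_leI card_atLeastAtMost card_gt_0_iff card_mono diff_Suc_1 finite_atLeastAtMost)
  qed
  have col1: "phi n (alpha I) i 1 = (if i \<le> card I then 1 else 0)"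
    if "I \<in> set Is" "1 \<le> i" for I i
  proof -
    have "I \<noteq> {}" "I \<subseteq> {1..n}" using v that by auto
    from alpha_chain[OF this] show ?thesis using phi_chain that unfolding chain_def by auto
  qed
  have "phi n (Msum Is) i 1 = lam i" if i: "i \<in> {1..n}" for i
  proof -
    have "phi n (Msum Is) i 1 = sum_list (map (\<lambda>I. if i \<le> card I then 1 else 0) Is)"
      unfolding ph using col1 i by (auto intro!: arg_cong[where f=sum_list])
    also have "\<dots> = int (length (filter (\<lambda>I. i \<le> card I) Is))"
      by (induction Is) auto
    also have "\<dots> = (\<Sum>k=i..n. int (length (filter (\<lambda>I. card I = k) Is)))"
      by (rule count_ge[OF cards])
    also have "\<dots> = (\<Sum>k=i..n. amult n lam k)" using c i by (intro sum.cong) auto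
    also have "\<dots> = lam i" using telescope i by auto
    finally show ?thesis .
  qed
  then show ?thesis using g by (simp add: GC_Pi_iff)
qed


lemma GCh_mono_j:
  assumes g: "GCh n P" and i: "1 \<le> i" and j: "1 \<le> j"
  shows "j \<le> j' \<Longrightarrow> i + j' \<le> n + 1 \<Longrightarrow> P i j' \<le> P i j"
proof (induction j' rule: dec_induct)
  case base then show ?case by simp
next
  case (step m)
  then have "P i (m + 1) \<le> P i m" using g i j unfolding GCh_def by auto
  with step show ?case by simp
qed

lemma GCh_last:
  assumes g: "GCh n P" and pn: "P n 1 \<ge> 0" and i: "1 \<le> i" "i \<le> n"
  shows "P i (n + 1 - i) \<ge> 0"
  using i(2)
proof (induction i rule: inc_induct)
  case base then show ?case using pn by simp
next
  case (step m)
  have "m \<ge> 1" using step(1) i(1) by simp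
  then have "P m ((n - m) + 1) \<ge> P (m + 1) (n - m)" using g step(2) unfolding GCh_def by auto
  moreover have "n + 1 - Suc m = n - m" "n + 1 - m = (n - m) + 1" using step(2) by auto
  ultimately show ?case using step(3) by simp
qed

lemma GCh_nonneg:
  assumes g: "GCh n P" and pn: "n \<ge> 1 \<longrightarrow> P n 1 \<ge> 0"
  shows "P i j \<ge> 0"
proof (cases "1 \<le> i \<and> 1 \<le> j \<and> i + j \<le> n + 1")
  case True
  then have "P i (n + 1 - i) \<le> P i j" using GCh_mono_j[OF g, of i j "n + 1 - i"] by auto
  moreover have "P i (n + 1 - i) \<ge> 0" using GCh_last[OF g _, of i] pn True by auto
  ultimately show ?thesis by simp
next
  case False then show ?thesis using g unfolding GCh_def by auto
qed

lemma GCh_col1: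
  assumes g: "GCh n P" and "1 \<le> i" "i < n"
  shows "P (i + 1) 1 \<le> P i 1"
proof -
  have "P i 1 \<ge> P i (1 + 1) \<and> P i (1 + 1) \<ge> P (i + 1) 1"
  proof -
    have "1 \<le> i \<and> 1 \<le> (1::nat) \<and> i + 1 + 1 \<le> n + 1" using assms by simp
    then show ?thesis using g unfolding GCh_def by blast
  qed
  then show ?thesis by linarith
qed


lemma Msum_Cons: "Msum (I # Is) = (\<lambda>r c. alpha I r c + Msum Is r c)"
  by (simp add: Msum_def)

lemma phi_add: "phi n (\<lambda>r c. f r c + g r c) = (\<lambda>i j. phi n f i j + phi n g i j)"
  unfolding phi_def by (auto simp: fun_eq_iff sum.distrib)

lemma surj_main:
  "GCh n P \<Longrightarrow> (n \<ge> 1 \<longrightarrow> P n 1 \<ge> 0) \<Longrightarrow>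
   \<exists>Is. (\<forall>I\<in>set Is. I \<noteq> {} \<and> I \<subseteq> {1..n}) \<and>
     (\<forall>k\<in>{1..n}. int (length (filter (\<lambda>I. card I = k) Is)) = amult n (\<lambda>i. P i 1) k) \<and>
     phi n (Msum Is) = P"
proof (induction "nat (\<Sum>i=1..n. P i 1)" arbitrary: P rule: less_induct)
  case less
  note g = less.prems(1) and pn = less.prems(2)
  note nn = GCh_nonneg[OF g pn]
  show ?case
  proof (cases "\<exists>i\<in>{1..n}. P i 1 > 0")
    case False
    then have z1: "i \<in> {1..n} \<Longrightarrow> P i 1 = 0" for i using nn[of i 1] by force
    have P0: "P = (\<lambda>_ _. 0)"
    proof (intro ext)
      fix i j
      show "P i j = 0"
      proof (cases "1 \<le> i \<and> 1 \<le> j \<and> i + j \<le> n + 1")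
        case True
        then have "P i j \<le> P i 1" using GCh_mono_j[OF g, of i 1 j] by auto
        moreover have "P i 1 = 0" using z1 True by auto
        ultimately show ?thesis using nn[of i j] by simp
      qed (use g in \<open>auto simp: GCh_def\<close>)
    qed
    have "amult n (\<lambda>i. P i 1) k = 0" for k unfolding amult_def P0 by simp
    moreover have "phi n (Msum []) = P" unfolding P0 Msum_def phi_def by (simp add: fun_eq_iff)
    ultimately show ?thesis by (intro exI[of _ "[]"]) simp
  next
    case True
    define S where "S = {i\<in>{1..n}. P i 1 > 0}"
    define k where "k = Max S"
    have finS: "finite S" and neS: "S \<noteq> {}" using True by (auto simp: S_def)
    have kS: "k \<in> S" using Max_in[OF finS neS] by (simp add: k_def)
    then have k1: "1 \<le> k" "k \<le> n" "P k 1 > 0" by (auto simp: S_def)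
    have above: "k < i \<Longrightarrow> i \<le> n \<Longrightarrow> P i 1 = 0" for i
    proof -
      assume a: "k < i" "i \<le> n"
      have "i \<notin> S" using Max_ge[OF finS, of i] a by (auto simp: k_def)
      then show ?thesis using a k1 nn[of i 1] by (auto simp: S_def)
    qed
    have below: "P k 1 \<le> P i 1" if i1: "1 \<le> i" and ik: "i \<le> k" for i
      using ik
    proof (induction i rule: inc_induct)
      case (step m)
      then have "P (m + 1) 1 \<le> P m 1" using GCh_col1[OF g, of m] k1 i1 by auto
      with step show ?case by simp
    qed simp
    define T where "T i = {j. 1 \<le> j \<and> i + j \<le> n + 1 \<and> P i j > 0}" for i
    define col where "col i = Max (T i)" for i
    have Tprops: "col i \<in> T i \<and> (\<forall>j\<in>T i. j \<le> col i)" if "1 \<le> i" "i \<le> k" for i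
    proof -
      have "finite (T i)" unfolding T_def by (rule finite_subset[of _ "{..n+1}"]) auto
      moreover have "1 \<in> T i" unfolding T_def using below[OF that] k1 that by auto
      ultimately show ?thesis unfolding col_def using Max_in Max_ge by blast
    qed
    have cp: "1 \<le> col i \<and> i + col i \<le> n + 1 \<and> P i (col i) > 0 \<and> P i (col i + 1) \<le> 0"
      if "1 \<le> i" "i \<le> k" for i
    proof -
      have a: "1 \<le> col i \<and> i + col i \<le> n + 1 \<and> P i (col i) > 0"
        using Tprops[OF that] by (auto simp: T_def)
      have "P i (col i + 1) \<le> 0"
      proof (cases "i + (col i + 1) \<le> n + 1")
        case True
        then show ?thesis using Tprops[OF that] a by (force simp: T_def)
      next
        case False then show ?thesis using g unfolding GCh_def by auto
      qed
      with a show ?thesis by simp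
    qed
    have ch: "chain n k col"
      unfolding chain_def
    proof (rule conjI; intro allI impI)
      fix r assume "1 \<le> r \<and> r \<le> k"
      then show "1 \<le> col r \<and> col r + r \<le> n + 1" using cp[of r] by auto
    next
      fix r assume r: "1 \<le> r \<and> r < k"
      have c: "1 \<le> col (r+1) \<and> r + 1 + col (r+1) \<le> n + 1 \<and> P (r+1) (col (r+1)) > 0"
        using cp[of "r+1"] r by auto
      then have "P r (col (r+1) + 1) \<ge> P (r+1) (col (r+1))"
        using g r unfolding GCh_def by auto
      then have "col (r+1) + 1 \<in> T r" using c r unfolding T_def by auto
      then show "col (r + 1) < col r" using Tprops[of r] r by force
    qed
    define I where "I = col ` {1..k}"
    have Ip: "I \<noteq> {} \<and> I \<subseteq> {1..n} \<and> card I = k \<and> alpha I = chainmat k col"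
      using chain_alpha[OF ch k1(1)] by (simp add: I_def)
    define Q where "Q = phi n (chainmat k col)"
    have Qf: "Q i j = (if 1 \<le> i \<and> i \<le> k \<and> 1 \<le> j \<and> j \<le> col i then 1 else 0)" for i j
      unfolding Q_def by (rule phi_chain[OF ch])
    define P' where "P' = (\<lambda>i j. P i j - Q i j)"
    have Q1: "Q i 1 = (if 1 \<le> i \<and> i \<le> k then 1 else 0)" for i
      using Qf[of i 1] cp[of i] by auto
    have g': "GCh n P'"
      unfolding GCh_def
    proof (intro conjI allI impI)
      fix i j
      assume "\<not> (1 \<le> i \<and> 1 \<le> j \<and> i + j \<le> n + 1)"
      then show "P' i j = 0" using g cp[of i] unfolding GCh_def P'_def Qf by auto
    next
      fix i j
      assume r: "1 \<le> i \<and> 1 \<le> j \<and> i + j + 1 \<le> n + 1"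
      then have gi: "P i (j + 1) \<le> P i j" "P (i + 1) j \<le> P i (j + 1)"
        using g unfolding GCh_def by auto
      show "P' i (j + 1) \<le> P' i j"
      proof (cases "1 \<le> i \<and> i \<le> k \<and> j = col i")
        case True
        then show ?thesis using cp[of i] unfolding P'_def Qf by auto
      next
        case False
        then show ?thesis using gi r unfolding P'_def Qf by auto
      qed
      have ci: "i + 1 \<le> k \<Longrightarrow> col (i + 1) < col i" using ch r unfolding chain_def by auto
      have pos: "j + 1 \<le> col i \<Longrightarrow> i \<le> k \<Longrightarrow> P i (j + 1) > 0"
      proof -
        assume a: "j + 1 \<le> col i" "i \<le> k"
        have "P i (col i) \<le> P i (j + 1)" using GCh_mono_j[OF g, of i "j+1" "col i"] a r cp[of i] by auto
        then show ?thesis using cp[of i] a r by auto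
      qed
      have zer: "P (i + 1) j \<le> 0" if z: "\<not> (i + 1 \<le> k \<and> j \<le> col (i + 1))"
      proof (cases "i + 1 \<le> k")
        case True
        then have "j \<notin> T (i + 1)" using Tprops[of "i+1"] z by auto
        then show ?thesis using r unfolding T_def by auto
      next
        case False
        then have "P (i + 1) 1 = 0" using above[of "i+1"] r by auto
        moreover have "P (i + 1) j \<le> P (i + 1) 1" using GCh_mono_j[OF g, of "i+1" 1 j] r by auto
        ultimately show ?thesis by simp
      qed
      show "P' (i + 1) j \<le> P' i (j + 1)"
        using gi r ci pos zer unfolding P'_def Qf by auto
    qed
    have pn': "n \<ge> 1 \<longrightarrow> P' n 1 \<ge> 0"
      using k1 Q1[of n] nn[of n 1] unfolding P'_def by auto
    have sum': "(\<Sum>i=1..n. P' i 1) = (\<Sum>i=1..n. P i 1) - (\<Sum>i=1..n. Q i 1)"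
      unfolding P'_def by (simp add: sum_subtractf)
    have "(\<Sum>i=1..n. Q i 1) \<ge> Q k 1"
      by (rule member_le_sum) (use k1 Q1 in auto)
    then have "(\<Sum>i=1..n. Q i 1) \<ge> 1" using Q1[of k] k1 by simp
    moreover have "(\<Sum>i=1..n. P' i 1) \<ge> 0"
      using GCh_nonneg[OF g' pn'] by (simp add: sum_nonneg)
    ultimately have lt: "nat (\<Sum>i=1..n. P' i 1) < nat (\<Sum>i=1..n. P i 1)"
      using sum' by linarith
    obtain Is where Is: "\<forall>I\<in>set Is. I \<noteq> {} \<and> I \<subseteq> {1..n}"
      "\<forall>k\<in>{1..n}. int (length (filter (\<lambda>I. card I = k) Is)) = amult n (\<lambda>i. P' i 1) k"
      "phi n (Msum Is) = P'"
      using less.hyps[OF lt g' pn'] by blast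
    have "phi n (Msum (I # Is)) = P"
      unfolding Msum_Cons phi_add Is(3) Ip[THEN conjunct2, THEN conjunct2, THEN conjunct2]
      by (simp add: P'_def Q_def[symmetric] fun_eq_iff)
    moreover have "int (length (filter (\<lambda>I. card I = k') (I # Is))) = amult n (\<lambda>i. P i 1) k'"
      if "k' \<in> {1..n}" for k'
      using Is(2) that Ip Q1 k1 by (auto simp: amult_def P'_def)
    moreover have "\<forall>I'\<in>set (I # Is). I' \<noteq> {} \<and> I' \<subseteq> {1..n}" using Is(1) Ip by auto
    ultimately show ?thesis by blast
  qed
qed


definition supp :: "nat \<Rightarrow> (nat \<Rightarrow> nat \<Rightarrow> 'a::zero) \<Rightarrow> bool" where
  "supp n x \<longleftrightarrow> (\<forall>i j. \<not> (1 \<le> i \<and> 1 \<le> j \<and> i + j \<le> n + 1) \<longrightarrow> x i j = 0)"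

lemma recover:
  fixes x :: "nat \<Rightarrow> nat \<Rightarrow> 'a::ab_group_add"
  assumes s: "supp n x" and r: "1 \<le> i" "1 \<le> j" "i + j \<le> n + 1"
  shows "x i j = phi n x i j - phi n x i (j + 1)"
proof -
  have a: "phi n x i j = x i j + (\<Sum>l=Suc j..n + 1 - i. x i l)"
    unfolding phi_def using r by (simp add: sum.atLeast_Suc_atMost)
  have b: "phi n x i (j + 1) = (\<Sum>l=Suc j..n + 1 - i. x i l)"
    unfolding phi_def using r by auto
  show ?thesis using a b by simp
qed

lemma phi_inj:
  fixes x y :: "nat \<Rightarrow> nat \<Rightarrow> 'a::ab_group_add"
  assumes "supp n x" "supp n y" "phi n x = phi n y"
  shows "x = y"
proof (intro ext)
  fix i j
  show "x i j = y i j"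
  proof (cases "1 \<le> i \<and> 1 \<le> j \<and> i + j \<le> n + 1")
    case True
    then show ?thesis using recover[OF assms(1)] recover[OF assms(2)] assms(3) by metis
  next
    case False then show ?thesis using assms unfolding supp_def by auto
  qed
qed

lemma supp_Msum:
  assumes v: "\<forall>I\<in>set Is. I \<noteq> {} \<and> I \<subseteq> {1..n}"
  shows "supp n (Msum Is)"
  unfolding supp_def Msum_def
proof (intro allI impI)
  fix i j assume nr: "\<not> (1 \<le> i \<and> 1 \<le> j \<and> i + j \<le> n + 1)"
  have "alpha I i j = 0" if "I \<in> set Is" for I
  proof -
    have "I \<noteq> {}" "I \<subseteq> {1..n}" using v that by auto
    from alpha_chain[OF this] show ?thesis
      using nr unfolding chain_def chainmat_def by auto
  qed
  then show "(\<Sum>I\<leftarrow>Is. alpha I i j) = 0" by (induction Is) auto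
qed

lemma supp_Ups: "M \<in> Upsilon n lam \<Longrightarrow> supp n M"
  using supp_Msum unfolding Upsilon_iff by blast

lemma supp_realarr: "supp n M \<Longrightarrow> supp n (realarr M)"
  unfolding supp_def realarr_def by auto

lemma supp_cmb:
  "(\<forall>(c, p)\<in>set ps. supp n p) \<Longrightarrow> supp n (\<lambda>i j. sum_list (map (\<lambda>(c, p). (c::real) * p i j) ps))"
proof (induction ps)
  case Nil then show ?case by (simp add: supp_def)
next
  case (Cons a ps)
  then show ?case by (cases a) (auto simp: supp_def)
qed

lemma phi_cmb:
  "phi n (\<lambda>i j. sum_list (map (\<lambda>(c, p). (c::real) * p i j) ps)) =
   (\<lambda>i j. sum_list (map (\<lambda>(c, p). c * phi n p i j) ps))"
proof (induction ps)
  case Nil then show ?case by (simp add: phi_def fun_eq_iff)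
next
  case (Cons a ps)
  obtain c p where a: "a = (c, p)" by (cases a)
  show ?case
  proof (intro ext)
    fix i j
    have "phi n (\<lambda>i j. sum_list (map (\<lambda>(c, p). c * p i j) (a # ps))) i j =
          c * phi n p i j + phi n (\<lambda>i j. sum_list (map (\<lambda>(c, p). c * p i j) ps)) i j"
      unfolding phi_def a by (simp add: sum.distrib sum_distrib_left)
    then show "phi n (\<lambda>i j. sum_list (map (\<lambda>(c, p). c * p i j) (a # ps))) i j =
          sum_list (map (\<lambda>(c, p). c * phi n p i j) (a # ps))" using Cons a by simp
  qed
qed

theorem mainTheorem5:
  fixes n :: nat and lam :: "nat \<Rightarrow> int"
  assumes dom: "\<forall>i. 1 \<le> i \<and> i < n \<longrightarrow> lam i \<ge> lam (i + 1)"
    and nonneg: "n \<ge> 1 \<longrightarrow> lam n \<ge> 0"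
  shows "bij_betw (phi n) (Upsilon n lam) (GC_Pi n lam) \<and>
         inj_on (phi n) (conv_arr (realarr ` Upsilon n lam)) \<and>
         phi n ` conv_arr (realarr ` Upsilon n lam) = conv_arr (realarr ` GC_Pi n lam)"
proof -
  have inj1: "inj_on (phi n) (Upsilon n lam)"
    by (rule inj_onI) (use phi_inj supp_Ups in blast)
  have im1: "phi n ` Upsilon n lam \<subseteq> GC_Pi n lam"
  proof
    fix y assume "y \<in> phi n ` Upsilon n lam"
    then obtain M where "M \<in> Upsilon n lam" "y = phi n M" by blast
    then show "y \<in> GC_Pi n lam" using into unfolding Upsilon_iff by blast
  qed
  have im2: "GC_Pi n lam \<subseteq> phi n ` Upsilon n lam"
  proof
    fix P assume "P \<in> GC_Pi n lam"
    then have g: "GCh n P" and c1: "\<forall>i\<in>{1..n}. P i 1 = lam i" by (auto simp: GC_Pi_iff)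
    have pn: "n \<ge> 1 \<longrightarrow> P n 1 \<ge> 0" using c1 nonneg by auto
    obtain Is where Is: "\<forall>I\<in>set Is. I \<noteq> {} \<and> I \<subseteq> {1..n}"
      "\<forall>k\<in>{1..n}. int (length (filter (\<lambda>I. card I = k) Is)) = amult n (\<lambda>i. P i 1) k"
      "phi n (Msum Is) = P"
      using surj_main[OF g pn] by blast
    have "amult n (\<lambda>i. P i 1) k = amult n lam k" if "k \<in> {1..n}" for k
      using c1 that by (auto simp: amult_def)
    then have "Msum Is \<in> Upsilon n lam" using Is unfolding Upsilon_iff by auto
    then show "P \<in> phi n ` Upsilon n lam" using Is(3) by force
  qed
  have bij: "bij_betw (phi n) (Upsilon n lam) (GC_Pi n lam)"
    unfolding bij_betw_def using inj1 im1 im2 by blast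
  have suppC: "supp n x" if xin: "x \<in> conv_arr (realarr ` Upsilon n lam)" for x
  proof -
    obtain ps where ps: "\<forall>(c, p)\<in>set ps. 0 \<le> c \<and> p \<in> realarr ` Upsilon n lam"
      "x = (\<lambda>i j. sum_list (map (\<lambda>(c, p). c * p i j) ps))"
      using xin unfolding conv_arr_def by blast
    have "\<forall>(c, p)\<in>set ps. supp n p" using ps(1) supp_Ups supp_realarr by fast
    then show ?thesis using ps(2) supp_cmb by simp
  qed
  have inj2: "inj_on (phi n) (conv_arr (realarr ` Upsilon n lam))"
    by (rule inj_onI) (use phi_inj suppC in blast)
  have c1: "phi n ` conv_arr (realarr ` Upsilon n lam) \<subseteq> conv_arr (realarr ` GC_Pi n lam)"
  proof
    fix y assume "y \<in> phi n ` conv_arr (realarr ` Upsilon n lam)"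
    then obtain ps where ps: "ps \<noteq> []" "\<forall>(c, p)\<in>set ps. 0 \<le> c \<and> p \<in> realarr ` Upsilon n lam"
      "sum_list (map fst ps) = 1"
      "y = phi n (\<lambda>i j. sum_list (map (\<lambda>(c, p). c * p i j) ps))"
      unfolding conv_arr_def by blast
    define ps' where "ps' = map (\<lambda>(c, p). (c, phi n p)) ps"
    have "ps' \<noteq> []" using ps(1) by (simp add: ps'_def)
    moreover have "\<forall>(c, p)\<in>set ps'. 0 \<le> c \<and> p \<in> realarr ` GC_Pi n lam"
    proof
      fix cp assume "cp \<in> set ps'"
      then obtain c p where cp: "cp = (c, phi n p)" "(c, p) \<in> set ps" unfolding ps'_def by auto
      then obtain M where "0 \<le> c" "M \<in> Upsilon n lam" "p = realarr M" using ps(2) by blast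
      then show "case cp of (c, p) \<Rightarrow> 0 \<le> c \<and> p \<in> realarr ` GC_Pi n lam"
        using cp im1 phi_realarr by auto
    qed
    moreover have "sum_list (map fst ps') = 1" using ps(3)
      by (simp add: ps'_def case_prod_beta comp_def)
    moreover have "y = (\<lambda>i j. sum_list (map (\<lambda>(c, p). c * p i j) ps'))"
      unfolding ps(4) phi_cmb by (simp add: ps'_def case_prod_beta comp_def split_def)
    ultimately show "y \<in> conv_arr (realarr ` GC_Pi n lam)" unfolding conv_arr_def by blast
  qed
  have c2: "conv_arr (realarr ` GC_Pi n lam) \<subseteq> phi n ` conv_arr (realarr ` Upsilon n lam)"
  proof
    fix x assume "x \<in> conv_arr (realarr ` GC_Pi n lam)"
    then obtain ps where ps: "ps \<noteq> []" "\<forall>(c, p)\<in>set ps. 0 \<le> c \<and> p \<in> realarr ` GC_Pi n lam"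
      "sum_list (map fst ps) = 1"
      "x = (\<lambda>i j. sum_list (map (\<lambda>(c, p). c * p i j) ps))"
      unfolding conv_arr_def by blast
    define gf where "gf p = (SOME q. q \<in> realarr ` Upsilon n lam \<and> phi n q = p)" for p
    have gfp: "gf p \<in> realarr ` Upsilon n lam \<and> phi n (gf p) = p" if pin: "p \<in> realarr ` GC_Pi n lam" for p
    proof -
      obtain P where P: "P \<in> GC_Pi n lam" "p = realarr P" using pin by blast
      then obtain M where "M \<in> Upsilon n lam" "P = phi n M" using im2 by blast
      then have "\<exists>q. q \<in> realarr ` Upsilon n lam \<and> phi n q = p" using P phi_realarr by auto
      then show ?thesis unfolding gf_def by (rule someI_ex)
    qed
    define ps' where "ps' = map (\<lambda>(c, p). (c, gf p)) ps"
    have "ps' \<noteq> []" using ps(1) by (simp add: ps'_def)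
    moreover have "\<forall>(c, p)\<in>set ps'. 0 \<le> c \<and> p \<in> realarr ` Upsilon n lam"
      using ps(2) gfp unfolding ps'_def by auto
    moreover have "sum_list (map fst ps') = 1" using ps(3)
      by (simp add: ps'_def case_prod_beta comp_def)
    moreover have "phi n (\<lambda>i j. sum_list (map (\<lambda>(c, p). c * p i j) ps')) = x"
    proof -
      have "map (\<lambda>(c, p). c * phi n p i j) ps' = map (\<lambda>(c, p). c * p i j) ps" for i j
        unfolding ps'_def using ps(2) gfp by (auto simp: case_prod_beta)
      then show ?thesis unfolding phi_cmb ps(4) by simp
    qed
    ultimately show "x \<in> phi n ` conv_arr (realarr ` Upsilon n lam)" unfolding conv_arr_def by blast
  qed
  show ?thesis using bij inj2 c1 c2 by blast
qed

end
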